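(* Let $T$ be a Boolean algebra (with order $\le$, meet $\land$, join $\lor$ and complement $\neg$), and let $(a,g)$ and $(a',g')$ be contracts over $T$. Let $\mathcal{C}_c=(a_c,g_c)$ be their composition, given by $$a_c=(a\land a')\lor(a\land\neg g)\lor(a'\land\neg g'),\qquad g_c=(g\lor\neg a)\land(g'\lor\neg a').$$ Suppose that $a''\in T$ satisfies $a''\land g\land a\le a'\land g\land a$ and that $g''\in T$ satisfies $g\land g'\le g''$. Then the contract $(a\land a'',\,g'')$ is a relaxation of $\mathcal{C}_c$, i.e. $\mathcal{C}_c\le (a\land a'',g'')$.
   Context: A contract over a Boolean algebra $T$ (the "term algebra") is a pair $(a,g)$ of elements of $T$, called assumptions and guarantees. Contracts are ordered by refinement: for contracts $\mathcal{C}=(a,g)$ and $\mathcal{C}'=(a',g')$, $\mathcal{C}\le\mathcal{C}'$ (read "$\mathcal{C}$ refines $\mathcal{C}'$", or "$\mathcal{C}'$ is a relaxation of $\mathcal{C}$") holds iff $a'\le a$ and $g\lor\neg a\le g'\lor\neg a'$. *)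

theory Defs
  imports Main
begin

text \<open>Contracts over a Boolean algebra: pairs (assumptions, guarantees).
  Refinement: (a,g) refines (a',g') iff a' <= a and g \<squnion> -a <= g' \<squnion> -a'.\<close>

type_synonym 'a contract = "'a \<times> 'a"

definition refines :: "'a::boolean_algebra contract \<Rightarrow> 'a contract \<Rightarrow> bool" where
  "refines C C' \<longleftrightarrow> fst C' \<le> fst C \<and> sup (snd C) (- fst C) \<le> sup (snd C') (- fst C')"

definition composition :: "'a::boolean_algebra contract \<Rightarrow> 'a contract \<Rightarrow> 'a contract" where
  "composition C C' =
     (let a = fst C; g = snd C; a' = fst C'; g' = snd C' in
      (sup (sup (inf a a') (inf a (- g))) (inf a' (- g')),
       inf (sup g (- a)) (sup g' (- a'))))"

end

theory Submission imports Defs begin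
lemma L1:
  fixes a g a' g' a'' :: "'a::boolean_algebra"
  assumes h1: "inf (inf a'' g) a \<le> inf (inf a' g) a"
  shows "inf a a'' \<le> sup (sup (inf a a') (inf a (- g))) (inf a' (- g'))"
proof -
  let ?x = "inf a a''"
  have e: "?x = sup (inf ?x g) (inf ?x (-g))"
    by (simp add: inf_sup_distrib1[symmetric])
  have "inf ?x g = inf (inf a'' g) a" by (simp add: inf_aci)
  also have "\<dots> \<le> inf (inf a' g) a" by (rule h1)
  also have "\<dots> \<le> inf a a'" by (simp add: inf_aci le_infI2)
  finally have 1: "inf ?x g \<le> inf a a'" .
  have 2: "inf ?x (-g) \<le> inf a (-g)" by (simp add: le_infI1)
  have "?x \<le> sup (inf a a') (inf a (- g))"
    using 1 2 e by (metis sup_mono)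
  then show ?thesis by (simp add: le_supI1)
qed
lemma L2:
  fixes a g a' g' a'' g'' :: "'a::boolean_algebra"
  assumes h1: "inf (inf a'' g) a \<le> inf (inf a' g) a"
    and h2: "inf g g' \<le> g''"
  shows "sup (inf (sup g (- a)) (sup g' (- a'))) (- sup (sup (inf a a') (inf a (- g))) (inf a' (- g'))) \<le> sup g'' (- inf a a'')"
proof -
  let ?x = "inf a a''"
  let ?ac = "sup (sup (inf a a') (inf a (- g))) (inf a' (- g'))"
  let ?gc = "inf (sup g (- a)) (sup g' (- a'))"
  have xa: "?x \<le> ?ac" using L1[OF h1] .
  have b: "inf (- ?ac) ?x = bot" using xa
    by (simp add: inf_shunt inf_commute sup_aci)
  have c: "inf (sup ?gc (- ?ac)) ?x = inf ?gc ?x"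
    using b by (simp add: inf_sup_distrib2)
  have "inf ?gc ?x = inf (inf (sup g (- a)) a) (inf a'' (sup g' (- a')))" by (simp add: inf_aci)
  also have "inf (sup g (- a)) a = inf g a" by (simp add: inf_sup_distrib2)
  finally have f: "inf ?gc ?x = inf (inf (inf g a) a'') (sup g' (- a'))" by (simp add: inf_aci)
  have g1: "inf (inf g a) a'' \<le> inf a' g" using h1
    by (simp add: inf_aci)
  have "inf ?gc ?x \<le> inf (inf a' g) (sup g' (- a'))"
    unfolding f using g1 by (rule inf_mono) simp
  also have "inf (inf a' g) (sup g' (- a')) = inf (inf a' g) g'"
    by (simp add: inf_sup_distrib1 inf_aci)
  also have "\<dots> \<le> inf g g'" by (meson inf_le2 inf.cobounded1 inf.cobounded2 order_trans le_infI)
  also note h2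
  finally have "inf (sup ?gc (- ?ac)) ?x \<le> g''" using c by simp
  then show ?thesis by (simp add: shunt1 sup_commute)
qed
theorem theorem1:
  fixes a g a' g' a'' g'' :: "'a::boolean_algebra"
  assumes "inf (inf a'' g) a \<le> inf (inf a' g) a"
    and "inf g g' \<le> g''"
  shows "refines (composition (a, g) (a', g')) (inf a a'', g'')"
  unfolding refines_def composition_def Let_def fst_conv snd_conv
  using L1[OF assms(1)] L2[OF assms] by blast

end
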